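(* Let $(G_i)_{i\in I}$ be a family of $g$-barrelled convergence groups. Then the product $\prod_{i\in I}G_i$, with the product convergence structure, is $g$-barrelled.
   Context: All groups are abelian. A convergence group is an abelian group with a convergence structure (an assignment to each point $x$ of a collection of filters converging to $x$). This assignment must satisfy three conditions: point ultrafilters converge to their point; finite intersections of filters converging to $x$ converge to $x$; and finer filters converge. The group operation must be compatible: $\mathcal F\to x$, $\mathcal G\to y$ imply $\mathcal F-\mathcal G\to x-y$. In the product convergence structure, a filter converges iff all its coordinate projections converge. $\mathbb T=\mathbb R/\mathbb Z$. $\Gamma G$ is the group of continuous homomorphisms $G\to\mathbb T$, and $\Gamma_s G$ is $\Gamma G$ with the topology of pointwise convergence. A set $M\subseteq\Gamma G$ is equicontinuous if for every filter $\mathcal F\to0$ in $G$, the filter generated by $\{\varphi(x):\varphi\in M, x\in F\}$, $F\in\mathcal F$, converges to $0$ in $\mathbb T$. A convergence group $G$ is $g$-barrelled if every compact subset of $\Gamma_s G$ is equicontinuous. *)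

theory Defs
  imports "HOL-Analysis.Analysis" "HOL-Library.Function_Algebras"
begin

text \<open>A convergence group is modelled as a subgroup S of an ambient abelian group
  type 'a together with a convergence relation c F x ("the proper filter F on S
  converges to x").  Filters on S are filters on 'a containing S.  In Isabelle
  G \<le> F means G is finer than F; the set-intersection of two filters is sup.\<close>

definition conv_group :: "'a::ab_group_add set \<Rightarrow> ('a filter \<Rightarrow> 'a \<Rightarrow> bool) \<Rightarrow> bool" where
  "conv_group S c \<longleftrightarrow>
     0 \<in> S \<and> (\<forall>x\<in>S. \<forall>y\<in>S. x - y \<in> S) \<and>
     (\<forall>F x. c F x \<longrightarrow> x \<in> S \<and> F \<noteq> bot \<and> eventually (\<lambda>y. y \<in> S) F) \<and>
     (\<forall>x\<in>S. c (principal {x}) x) \<and>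
     (\<forall>F G x. c F x \<and> c G x \<longrightarrow> c (sup F G) x) \<and>
     (\<forall>F G x. c F x \<and> G \<le> F \<and> G \<noteq> bot \<longrightarrow> c G x) \<and>
     (\<forall>F G x y. c F x \<and> c G y \<longrightarrow> c (filtermap (\<lambda>(a, b). a - b) (F \<times>\<^sub>F G)) (x - y))"

text \<open>The circle group T = R/Z is represented (isomorphically) as the unit circle in
  the complex numbers, with multiplication as group operation; 1 is the neutral element.
  Characters are normalised to be 1 outside the carrier, so that the pointwise
  topology on Gamma G is the (product) topology on the function space.\<close>

definition characters :: "'a::ab_group_add set \<Rightarrow> ('a filter \<Rightarrow> 'a \<Rightarrow> bool) \<Rightarrow> ('a \<Rightarrow> complex) set" where
  "characters S c = {\<phi>.
     (\<forall>x\<in>S. cmod (\<phi> x) = 1) \<and> (\<forall>x. x \<notin> S \<longrightarrow> \<phi> x = 1) \<and>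
     (\<forall>x\<in>S. \<forall>y\<in>S. \<phi> (x + y) = \<phi> x * \<phi> y) \<and>
     (\<forall>F x. c F x \<longrightarrow> filterlim \<phi> (nhds (\<phi> x)) F)}"

definition equicontinuous :: "('a::ab_group_add filter \<Rightarrow> 'a \<Rightarrow> bool) \<Rightarrow> ('a \<Rightarrow> complex) set \<Rightarrow> bool" where
  "equicontinuous c M \<longleftrightarrow>
     (\<forall>F. c F 0 \<longrightarrow> filterlim (\<lambda>(\<phi>, x). \<phi> x) (nhds 1) (principal M \<times>\<^sub>F F))"

definition g_barrelled :: "'a::ab_group_add set \<Rightarrow> ('a filter \<Rightarrow> 'a \<Rightarrow> bool) \<Rightarrow> bool" where
  "g_barrelled S c \<longleftrightarrow>
     (\<forall>M. M \<subseteq> characters S c \<and> compact M \<longrightarrow> equicontinuous c M)"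

definition prod_carrier :: "('i \<Rightarrow> 'a set) \<Rightarrow> ('i \<Rightarrow> 'a) set" where
  "prod_carrier S = {f. \<forall>i. f i \<in> S i}"

definition prod_conv :: "('i \<Rightarrow> 'a set) \<Rightarrow> ('i \<Rightarrow> 'a filter \<Rightarrow> 'a \<Rightarrow> bool)
    \<Rightarrow> ('i \<Rightarrow> 'a) filter \<Rightarrow> ('i \<Rightarrow> 'a) \<Rightarrow> bool" where
  "prod_conv S c F f \<longleftrightarrow>
     f \<in> prod_carrier S \<and> F \<noteq> bot \<and> eventually (\<lambda>g. g \<in> prod_carrier S) F \<and>
     (\<forall>i. c i (filtermap (\<lambda>g. g i) F) (f i))"

end

theory Submission
  imports Defs
begin

definition Uset :: "('i \<Rightarrow> 'a::zero set) \<Rightarrow> 'i set \<Rightarrow> ('i \<Rightarrow> 'a) set" where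
  "Uset S J = {x \<in> prod_carrier S. \<forall>j\<in>J. x j = 0}"

definition ej :: "'i \<Rightarrow> 'a::zero \<Rightarrow> ('i \<Rightarrow> 'a)" where
  "ej j a = (\<lambda>i. if i = j then a else 0)"

lemma unit_sq_re:
  fixes w :: complex assumes "cmod w = 1"
  shows "Re (w * w) = 2 * (Re w)^2 - 1" and "(cmod (w - 1))^2 = 2 - 2 * Re w"
proof -
  have h: "(Re w)^2 + (Im w)^2 = 1" using assms cmod_power2[of w] by simp
  show "Re (w * w) = 2 * (Re w)^2 - 1" using h by (simp add: power2_eq_square algebra_simps)
  show "(cmod (w - 1))^2 = 2 - 2 * Re w" using h cmod_power2[of "w - 1"]
    by (simp add: power2_eq_square algebra_simps)
qed

lemma doubling:
  fixes ch :: "'b::plus \<Rightarrow> complex"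
  assumes T: "\<forall>x\<in>T. x + x \<in> T" and u: "\<forall>x\<in>T. cmod (ch x) = 1"
    and m: "\<forall>x\<in>T. ch (x + x) = ch x * ch x" and a: "a \<in> T" and ne: "ch a \<noteq> 1"
  shows "\<exists>b\<in>T. cmod (ch b - 1) \<ge> 1"
proof (rule ccontr)
  assume "\<not> ?thesis"
  hence lt: "\<forall>b\<in>T. cmod (ch b - 1) < 1" by auto
  define v where "v k = ((\<lambda>x. x + x) ^^ k) a" for k
  have vT: "v k \<in> T" for k by (induction k) (use a T in \<open>auto simp: v_def\<close>)
  have vS: "v (Suc k) = v k + v k" for k by (simp add: v_def)
  have re: "Re (ch b) > 1/2" if "b \<in> T" for b
  proof -
    have "(cmod (ch b - 1))^2 < 1" using lt that
      by (simp add: power_less_one_iff)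
    thus ?thesis using unit_sq_re(2)[of "ch b"] u that by simp
  qed
  have re1: "Re (ch b) \<le> 1" if "b \<in> T" for b
    using complex_Re_le_cmod[of "ch b"] u that by simp
  have key: "1 - Re (ch (v k)) \<ge> 3^k * (1 - Re (ch a))" for k
  proof (induction k)
    case 0 then show ?case by (simp add: v_def)
  next
    case (Suc k)
    let ?w = "ch (v k)"
    have "ch (v (Suc k)) = ?w * ?w" using vS m vT by simp
    hence "1 - Re (ch (v (Suc k))) = 2 * (1 - Re ?w) * (1 + Re ?w)"
      using unit_sq_re(1)[of ?w] u vT by (simp add: power2_eq_square algebra_simps)
    also have "\<dots> \<ge> 3 * (1 - Re ?w)"
    proof -
      have "(1 - Re ?w) * (2 * Re ?w - 1) \<ge> 0" using re[OF vT[of k]] re1[OF vT[of k]] by simp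
      thus ?thesis by (simp add: algebra_simps)
    qed
    finally show ?case using Suc by simp
  qed
  have pos: "1 - Re (ch a) > 0"
  proof -
    have "Re (ch a) \<noteq> 1"
    proof
      assume r: "Re (ch a) = 1"
      have "(Re (ch a))^2 + (Im (ch a))^2 = 1" using u a cmod_power2[of "ch a"] by simp
      hence "Im (ch a) = 0" using r by simp
      hence "ch a = 1" using r complex_eqI by auto
      with ne show False by simp
    qed
    thus ?thesis using re1[OF a] by simp
  qed
  obtain k where "(1/2) / (1 - Re (ch a)) < 3^k"
    using real_arch_pow[of 3 "(1/2) / (1 - Re (ch a))"] by auto
  hence "1/2 < 3^k * (1 - Re (ch a))" using pos by (simp add: field_simps)
  with key[of k] re[OF vT[of k]] show False by simp
qed

lemma charD: "\<psi> \<in> characters T cc \<Longrightarrow> (\<forall>x\<in>T. cmod (\<psi> x) = 1) \<and> (\<forall>x\<in>T. \<forall>y\<in>T. \<psi> (x + y) = \<psi> x * \<psi> y)"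
  by (simp add: characters_def)

lemma cluster:
  fixes M :: "'b::topological_space set" and f :: "nat \<Rightarrow> 'b"
  assumes "compact M" "\<And>n. f n \<in> M"
  shows "\<exists>p\<in>M. \<forall>V. open V \<longrightarrow> p \<in> V \<longrightarrow> (\<forall>N. \<exists>n\<ge>N. f n \<in> V)"
proof (rule ccontr)
  assume "\<not> ?thesis"
  hence "\<forall>p\<in>M. \<exists>V N. open V \<and> p \<in> V \<and> (\<forall>n\<ge>N. f n \<notin> V)"
    by (simp add: not_le) (meson not_le)
  then obtain Oo Nn where ON: "\<And>p. p \<in> M \<Longrightarrow> open (Oo p) \<and> p \<in> Oo p \<and> (\<forall>n\<ge>Nn p. f n \<notin> Oo p)"
    by metis
  have "M \<subseteq> (\<Union>p\<in>M. Oo p)" using ON by blast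
  then obtain C' where C': "C' \<subseteq> M" "finite C'" "M \<subseteq> (\<Union>p\<in>C'. Oo p)"
    using compactE_image[OF assms(1), of M Oo] ON by blast
  define N where "N = (\<Sum>p\<in>C'. Nn p)"
  obtain p where p: "p \<in> C'" "f N \<in> Oo p" using C'(3) assms(2)[of N] by blast
  have "Nn p \<le> N" unfolding N_def using p(1) C'(2) by (simp add: member_le_sum)
  thus False using ON[of p] p C'(1) by blast
qed

locale pc =
  fixes S :: "'i \<Rightarrow> 'a::ab_group_add set" and c :: "'i \<Rightarrow> 'a filter \<Rightarrow> 'a \<Rightarrow> bool"
  assumes cg: "\<And>i. conv_group (S i) (c i)"
begin

abbreviation "P \<equiv> prod_carrier S"
abbreviation "C \<equiv> prod_conv S c"

lemma cgD1: "0 \<in> S i"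
  using cg[of i] unfolding conv_group_def by (elim conjE) assumption
lemma cgD2: "\<forall>x\<in>S i. \<forall>y\<in>S i. x - y \<in> S i"
  using cg[of i] unfolding conv_group_def by (elim conjE) assumption
lemma cgD3: "\<forall>x\<in>S i. c i (principal {x}) x"
  using cg[of i] unfolding conv_group_def by (elim conjE) assumption
lemma cgD5: "\<forall>F x. c i F x \<longrightarrow> x \<in> S i \<and> F \<noteq> bot \<and> eventually (\<lambda>y. y \<in> S i) F"
  using cg[of i] unfolding conv_group_def by (elim conjE) assumption
lemma cgD4: "\<forall>F G x. c i F x \<and> G \<le> F \<and> G \<noteq> bot \<longrightarrow> c i G x"
  using cg[of i] unfolding conv_group_def by (elim conjE) assumption
lemma S0: "0 \<in> S i" by (rule cgD1)
lemma Sdiff: "x \<in> S i \<Longrightarrow> y \<in> S i \<Longrightarrow> x - y \<in> S i" using cgD2[of i] by blast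
lemma Sneg: "y \<in> S i \<Longrightarrow> - y \<in> S i" using Sdiff[OF S0, of y i] by simp
lemma Sadd: "x \<in> S i \<Longrightarrow> y \<in> S i \<Longrightarrow> x + y \<in> S i" using Sdiff[of x i "- y"] Sneg[of y i] by simp
lemma c_pt: "x \<in> S i \<Longrightarrow> c i (principal {x}) x" using cgD3[of i] by blast
lemma c_mono: "c i F x \<Longrightarrow> G \<le> F \<Longrightarrow> G \<noteq> bot \<Longrightarrow> c i G x" using cgD4[of i] by blast

lemma P0: "0 \<in> P" by (simp add: prod_carrier_def S0)
lemma Padd: "x \<in> P \<Longrightarrow> y \<in> P \<Longrightarrow> x + y \<in> P" by (simp add: prod_carrier_def Sadd)
lemma Pdiff: "x \<in> P \<Longrightarrow> y \<in> P \<Longrightarrow> x - y \<in> P" by (simp add: prod_carrier_def Sdiff)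
lemma ej_P: "a \<in> S j \<Longrightarrow> ej j a \<in> P" by (simp add: prod_carrier_def ej_def S0)
lemma ej_0: "ej j 0 = 0" by (simp add: ej_def fun_eq_iff)
lemma U_P: "Uset S J \<subseteq> P" by (auto simp: Uset_def)

context fixes \<phi> assumes ch: "\<phi> \<in> characters P C"
begin
lemma ch_unit: "x \<in> P \<Longrightarrow> cmod (\<phi> x) = 1" using ch by (simp add: characters_def)
lemma ch_out: "x \<notin> P \<Longrightarrow> \<phi> x = 1" using ch by (simp add: characters_def)
lemma ch_mult: "x \<in> P \<Longrightarrow> y \<in> P \<Longrightarrow> \<phi> (x + y) = \<phi> x * \<phi> y" using ch by (simp add: characters_def)
lemma ch_cont: "C F x \<Longrightarrow> filterlim \<phi> (nhds (\<phi> x)) F" using ch by (simp add: characters_def)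
lemma ch_0: "\<phi> 0 = 1"
proof -
  have "\<phi> 0 = \<phi> 0 * \<phi> 0" using ch_mult[OF P0 P0] by simp
  moreover have "\<phi> 0 \<noteq> 0" using ch_unit[OF P0] by auto
  ultimately show ?thesis by (metis mult_cancel_left2)
qed

lemma fin_supp: "\<exists>J. finite J \<and> (\<forall>x\<in>Uset S J. \<phi> x = 1)"
proof -
  define \<Phi> where "\<Phi> = (INF J\<in>{J. finite J}. principal (Uset S J))"
  have ev: "eventually Q \<Phi> \<longleftrightarrow> (\<exists>J. finite J \<and> (\<forall>x\<in>Uset S J. Q x))" for Q
    unfolding \<Phi>_def
  proof (subst eventually_INF_base)
    show "{J. finite J} \<noteq> {}" by blast
    show "\<exists>x\<in>{J. finite J}. principal (Uset S x) \<le> inf (principal (Uset S a)) (principal (Uset S b))"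
      if "a \<in> {J. finite J}" "b \<in> {J. finite J}" for a b
    proof (rule bexI[of _ "a \<union> b"])
      show "a \<union> b \<in> {J. finite J}" using that by simp
      have "Uset S (a \<union> b) \<subseteq> Uset S a \<inter> Uset S b" unfolding Uset_def by blast
      thus "principal (Uset S (a \<union> b)) \<le> inf (principal (Uset S a)) (principal (Uset S b))"
        by simp
    qed
    show "(\<exists>b\<in>{J. finite J}. eventually Q (principal (Uset S b))) = (\<exists>J. finite J \<and> (\<forall>x\<in>Uset S J. Q x))"
      by (simp add: eventually_principal)
  qed
  have 0: "0 \<in> Uset S J" for J by (simp add: Uset_def P0)
  have nb: "\<Phi> \<noteq> bot"
  proof
    assume "\<Phi> = bot"
    hence "eventually (\<lambda>_. False) \<Phi>" by simp
    thus False using ev[of "\<lambda>_. False"] 0 by blast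
  qed
  have conv: "C \<Phi> 0"
    unfolding prod_conv_def
  proof (intro conjI allI)
    show "0 \<in> P" by (rule P0)
    show "\<Phi> \<noteq> bot" by (rule nb)
    show "eventually (\<lambda>g. g \<in> P) \<Phi>" unfolding ev by (rule exI[of _ "{}"]) (simp add: Uset_def)
    fix i
    have le: "filtermap (\<lambda>g. g i) \<Phi> \<le> principal {0}"
      unfolding le_principal eventually_filtermap ev
      by (rule exI[of _ "{i}"]) (simp add: Uset_def)
    have "filtermap (\<lambda>g. g i) \<Phi> \<noteq> bot" using nb by (simp add: filtermap_bot_iff)
    thus "c i (filtermap (\<lambda>g. g i) \<Phi>) (0 i)" using c_mono[OF c_pt[OF S0] le] by simp
  qed
  have "filterlim \<phi> (nhds 1) \<Phi>" using ch_cont[OF conv] ch_0 by simp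
  hence "eventually (\<lambda>x. dist (\<phi> x) 1 < 1) \<Phi>" by (rule tendstoD) simp
  then obtain J where J: "finite J" "\<forall>x\<in>Uset S J. dist (\<phi> x) 1 < 1"
    unfolding ev by blast
  have "\<forall>x\<in>Uset S J. \<phi> x = 1"
  proof (rule ccontr)
    assume "\<not> ?thesis"
    then obtain a where a: "a \<in> Uset S J" "\<phi> a \<noteq> 1" by auto
    have T: "\<forall>x\<in>Uset S J. x + x \<in> Uset S J" unfolding Uset_def using Padd by simp
    have "\<exists>b\<in>Uset S J. cmod (\<phi> b - 1) \<ge> 1"
    proof (rule doubling[where ch=\<phi>, OF T _ _ a(1) a(2)])
      show "\<forall>x\<in>Uset S J. cmod (\<phi> x) = 1" using U_P ch_unit by blast
      show "\<forall>x\<in>Uset S J. \<phi> (x + x) = \<phi> x * \<phi> x" using U_P ch_mult by blast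
    qed
    thus False using J(2) by (force simp: dist_norm)
  qed
  with J show ?thesis by blast
qed


definition rJ :: "'i set \<Rightarrow> ('i \<Rightarrow> 'a) \<Rightarrow> ('i \<Rightarrow> 'a)" where
  "rJ J x = (\<lambda>i. if i \<in> J then 0 else x i)"

lemma rJ_P: "x \<in> P \<Longrightarrow> rJ J x \<in> P" by (simp add: rJ_def prod_carrier_def S0)

lemma factor_gen:
  assumes "finite J" "x \<in> P"
  shows "\<phi> x = (\<Prod>j\<in>J. \<phi> (ej j (x j))) * \<phi> (rJ J x)"
  using assms(1)
proof (induction J rule: finite_induct)
  case empty
  have "rJ {} x = x" by (simp add: rJ_def)
  then show ?case by simp
next
  case (insert j J)
  have xj: "x j \<in> S j" using assms(2) by (simp add: prod_carrier_def)
  have eq: "rJ J x = ej j (x j) + rJ (insert j J) x"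
    using insert(2) by (auto simp: rJ_def ej_def fun_eq_iff)
  have "\<phi> (rJ J x) = \<phi> (ej j (x j)) * \<phi> (rJ (insert j J) x)"
    unfolding eq by (rule ch_mult[OF ej_P[OF xj] rJ_P[OF assms(2)]])
  with insert show ?case by (simp add: mult.assoc)
qed

lemma factor:
  assumes "finite J" "\<forall>y\<in>Uset S J. \<phi> y = 1" "x \<in> P"
  shows "\<phi> x = (\<Prod>j\<in>J. \<phi> (ej j (x j)))"
proof -
  have "rJ J x \<in> Uset S J" using rJ_P[OF assms(3)] by (simp add: Uset_def rJ_def)
  with assms factor_gen[OF assms(1,3)] show ?thesis by simp
qed

lemma chj_char: "(\<lambda>a. \<phi> (ej j a)) \<in> characters (S j) (c j)"
  unfolding characters_def
proof (intro CollectI conjI ballI allI impI)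
  fix a assume "a \<in> S j" thus "cmod (\<phi> (ej j a)) = 1" by (intro ch_unit ej_P)
next
  fix a assume "a \<notin> S j"
  hence "ej j a j \<notin> S j" by (simp add: ej_def)
  hence "ej j a \<notin> P" unfolding prod_carrier_def by blast
  thus "\<phi> (ej j a) = 1" by (rule ch_out)
next
  fix a b assume "a \<in> S j" "b \<in> S j"
  moreover have "ej j (a + b) = ej j a + ej j b" by (simp add: ej_def fun_eq_iff)
  ultimately show "\<phi> (ej j (a + b)) = \<phi> (ej j a) * \<phi> (ej j b)"
    by (simp add: ch_mult ej_P)
next
  fix F a assume cF: "c j F a"
  have a: "a \<in> S j" and nb: "F \<noteq> bot" and evS: "eventually (\<lambda>y. y \<in> S j) F"
    using cgD5[of j] cF by blast+
  have "C (filtermap (ej j) F) (ej j a)"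
    unfolding prod_conv_def
  proof (intro conjI allI)
    show "ej j a \<in> P" using a by (rule ej_P)
    show "filtermap (ej j) F \<noteq> bot" using nb by (simp add: filtermap_bot_iff)
    show "eventually (\<lambda>g. g \<in> P) (filtermap (ej j) F)"
      unfolding eventually_filtermap using evS by (rule eventually_mono) (rule ej_P)
    fix i
    show "c i (filtermap (\<lambda>g. g i) (filtermap (ej j) F)) (ej j a i)"
    proof (cases "i = j")
      case True
      have "filtermap (\<lambda>g. g i) (filtermap (ej j) F) = F"
        using True by (simp add: filtermap_filtermap ej_def filtermap_ident)
      thus ?thesis using True cF by (simp add: ej_def)
    next
      case False
      have "filtermap (\<lambda>g. g i) (filtermap (ej j) F) \<le> principal {0}"
        using False by (simp add: filtermap_filtermap ej_def le_principal eventually_filtermap)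
      moreover have "filtermap (\<lambda>g. g i) (filtermap (ej j) F) \<noteq> bot"
        using nb by (simp add: filtermap_bot_iff)
      ultimately show ?thesis using False c_mono[OF c_pt[OF S0]] by (simp add: ej_def)
    qed
  qed
  from ch_cont[OF this] show "filterlim (\<lambda>a. \<phi> (ej j a)) (nhds (\<phi> (ej j a))) F"
    by (simp add: filterlim_filtermap)
qed


end

lemma unif:
  assumes M: "compact M" "M \<subseteq> characters P C"
  shows "\<exists>J. finite J \<and> (\<forall>\<phi>\<in>M. \<forall>x\<in>Uset S J. \<phi> x = 1)"
proof (rule ccontr)
  assume H: "\<not> ?thesis"
  define sJ where "sJ \<phi> = (SOME J. finite J \<and> (\<forall>x\<in>Uset S J. \<phi> x = 1))" for \<phi> :: "('i \<Rightarrow> 'a) \<Rightarrow> complex"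
  have sJ: "finite (sJ \<phi>) \<and> (\<forall>x\<in>Uset S (sJ \<phi>). \<phi> x = 1)" if "\<phi> \<in> M" for \<phi>
    unfolding sJ_def by (rule someI_ex) (rule fin_supp, use that M in blast)
  have step: "\<exists>p. case p of (\<phi>, j, a) \<Rightarrow> \<phi> \<in> M \<and> j \<notin> K \<and> a \<in> S j \<and> \<phi> (ej j a) \<noteq> 1"
    if K: "finite K" for K
  proof -
    from H K obtain \<phi> x where \<phi>: "\<phi> \<in> M" and x: "x \<in> Uset S K" "\<phi> x \<noteq> 1" by blast
    have ch: "\<phi> \<in> characters P C" using \<phi> M by blast
    have xP: "x \<in> P" using x U_P by blast
    have "\<phi> x = (\<Prod>j\<in>sJ \<phi>. \<phi> (ej j (x j)))" using factor[OF ch] sJ[OF \<phi>] xP by blast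
    with x(2) obtain j where j: "j \<in> sJ \<phi>" "\<phi> (ej j (x j)) \<noteq> 1"
      by (metis (mono_tags, lifting) prod.neutral)
    have "j \<notin> K"
    proof
      assume "j \<in> K"
      hence "x j = 0" using x(1) by (simp add: Uset_def)
      thus False using j(2) ch_0[OF ch] by (simp add: ej_0)
    qed
    moreover have "x j \<in> S j" using xP by (simp add: prod_carrier_def)
    ultimately show ?thesis using \<phi> j(2) by (intro exI[of _ "(\<phi>, j, x j)"]) simp
  qed
  define pick where "pick K = (SOME p. case p of (\<phi>, j, a) \<Rightarrow> \<phi> \<in> M \<and> j \<notin> K \<and> a \<in> S j \<and> \<phi> (ej j a) \<noteq> 1)" for K
  have pick: "case pick K of (\<phi>, j, a) \<Rightarrow> \<phi> \<in> M \<and> j \<notin> K \<and> a \<in> S j \<and> \<phi> (ej j a) \<noteq> 1"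
    if "finite K" for K
    unfolding pick_def by (rule someI_ex[OF step[OF that]])
  define Ks where "Ks = rec_nat {} (\<lambda>n K. K \<union> sJ (fst (pick K)) \<union> {fst (snd (pick K))})"
  have Ks0: "Ks 0 = {}" by (simp add: Ks_def)
  have KsS: "Ks (Suc n) = Ks n \<union> sJ (fst (pick (Ks n))) \<union> {fst (snd (pick (Ks n)))}" for n
    by (simp add: Ks_def)
  define ph where "ph n = fst (pick (Ks n))" for n
  define jj where "jj n = fst (snd (pick (Ks n)))" for n
  define aa where "aa n = snd (snd (pick (Ks n)))" for n
  have finK: "finite (Ks n) \<and> ph n \<in> M \<and> jj n \<notin> Ks n \<and> aa n \<in> S (jj n) \<and> ph n (ej (jj n) (aa n)) \<noteq> 1" for n
  proof (induction n)
    case 0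
    then show ?case using pick[of "{}"] unfolding ph_def jj_def aa_def Ks0
      by (auto split: prod.splits)
  next
    case (Suc n)
    have f: "finite (Ks (Suc n))" using Suc sJ[of "ph n"] unfolding KsS ph_def by auto
    then show ?case using pick[OF f] unfolding ph_def jj_def aa_def
      by (auto split: prod.splits)
  qed
  have phM: "ph n \<in> M" for n using finK by blast
  have phC: "ph n \<in> characters P C" for n using phM M by blast
  have Ksmono: "Ks m \<subseteq> Ks n" if "m \<le> n" for m n
    using that by (induction n) (auto simp: KsS le_Suc_eq)
  have jjK: "jj m \<in> Ks n" if "m < n" for m n
    using Ksmono[of "Suc m" n] that by (auto simp: KsS jj_def)
  have sJK: "sJ (ph m) \<subseteq> Ks n" if "m < n" for m n
    using Ksmono[of "Suc m" n] that by (auto simp: KsS ph_def)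
  have jjinj: "jj m \<noteq> jj n" if "m \<noteq> n" for m n
  proof (cases "m < n")
    case True
    have "jj m \<in> Ks n" by (rule jjK[OF True])
    moreover have "jj n \<notin> Ks n" using finK[of n] by blast
    ultimately show ?thesis by metis
  next
    case False hence "n < m" using that by simp
    hence "jj n \<in> Ks m" by (rule jjK)
    moreover have "jj m \<notin> Ks m" using finK[of m] by blast
    ultimately show ?thesis by metis
  qed
  have injjj: "inj jj" using jjinj by (meson injI)
  obtain \<phi> where \<phi>: "\<phi> \<in> M" and clu: "\<forall>V. open V \<longrightarrow> \<phi> \<in> V \<longrightarrow> (\<forall>N. \<exists>n\<ge>N. ph n \<in> V)"
    using cluster[of M ph, OF M(1) phM] by (elim bexE) assumption
  define J0 where "J0 = sJ \<phi>"
  have J0: "finite J0" "\<forall>x\<in>Uset S J0. \<phi> x = 1" using sJ[OF \<phi>] by (auto simp: J0_def)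
  have "finite (jj -` J0)" using J0(1) injjj by (simp add: finite_vimageI)
  then obtain N where N: "jj -` J0 \<subseteq> {..<N}" using finite_nat_bounded by blast
  hence NJ: "jj n \<notin> J0" if "n \<ge> N" for n using that by auto
  define bsel where "bsel n w = (if n < N then 0 else
      SOME b. b \<in> S (jj n) \<and> cmod (ph n (w + ej (jj n) b) - 1) \<ge> 1/2)" for n w
  have bsel: "bsel n w \<in> S (jj n) \<and> (n \<ge> N \<longrightarrow> cmod (ph n (w + ej (jj n) (bsel n w)) - 1) \<ge> 1/2)"
    if w: "w \<in> P" for n w
  proof (cases "n < N")
    case True
    hence "bsel n w = 0" unfolding bsel_def by (rule if_P)
    thus ?thesis using True S0[of "jj n"] by simp
  next
    case False
    let ?ch = "\<lambda>a. ph n (ej (jj n) a)"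
    have chc: "?ch \<in> characters (S (jj n)) (c (jj n))" by (rule chj_char[OF phC])
    have "\<exists>b\<in>S (jj n). cmod (?ch b - 1) \<ge> 1"
    proof (rule doubling[where ch="?ch"])
      show "\<forall>x\<in>S (jj n). x + x \<in> S (jj n)" by (simp add: Sadd)
      show "\<forall>x\<in>S (jj n). cmod (?ch x) = 1" using charD[OF chc] by blast
      show "\<forall>x\<in>S (jj n). ?ch (x + x) = ?ch x * ?ch x" using charD[OF chc] by blast
      show "aa n \<in> S (jj n)" using finK[of n] by blast
      show "?ch (aa n) \<noteq> 1" using finK[of n] by blast
    qed
    then obtain b' where b': "b' \<in> S (jj n)" "cmod (?ch b' - 1) \<ge> 1" by blast
    have ex: "\<exists>b. b \<in> S (jj n) \<and> cmod (ph n (w + ej (jj n) b) - 1) \<ge> 1/2"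
    proof (cases "cmod (ph n w - 1) \<ge> 1/2")
      case True thus ?thesis using S0 by (intro exI[of _ 0]) (simp add: ej_0)
    next
      case False
      let ?u = "ph n w" and ?v = "?ch b'"
      have mu: "cmod ?u = 1" using ch_unit[OF phC w] .
      have eq: "ph n (w + ej (jj n) b') = ?u * ?v" using ch_mult[OF phC w ej_P[OF b'(1)]] .
      have "cmod (?u * ?v - 1 - (?u - 1)) \<le> cmod (?u * ?v - 1) + cmod (?u - 1)"
        by (rule norm_triangle_ineq4)
      moreover have "?u * ?v - 1 - (?u - 1) = ?u * (?v - 1)" by (simp add: algebra_simps)
      moreover have "cmod (?u * (?v - 1)) = cmod (?v - 1)" using mu by (simp add: norm_mult)
      ultimately have "cmod (?v - 1) \<le> cmod (?u * ?v - 1) + cmod (?u - 1)" by metis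
      hence "cmod (?u * ?v - 1) \<ge> 1/2" using b'(2) False by linarith
      thus ?thesis using b'(1) eq by (intro exI[of _ b']) simp
    qed
    show ?thesis using someI_ex[OF ex] False by (simp add: bsel_def)
  qed
  define Z where "Z = rec_nat 0 (\<lambda>n w. w + ej (jj n) (bsel n w))"
  have Z0: "Z 0 = 0" by (simp add: Z_def)
  have ZS: "Z (Suc n) = Z n + ej (jj n) (bsel n (Z n))" for n by (simp add: Z_def)
  have ZP: "Z n \<in> P" for n
  proof (induction n)
    case 0 show ?case unfolding Z0 by (rule P0)
  next
    case (Suc n) show ?case unfolding ZS
      by (rule Padd[OF Suc.IH ej_P[OF conjunct1[OF bsel[OF Suc.IH]]]])
  qed
  have Zunch: "Z n i = Z k i" if "k \<le> n" "\<forall>m. k \<le> m \<and> m < n \<longrightarrow> jj m \<noteq> i" for n k i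
    using that
  proof (induction n)
    case 0 thus ?case by simp
  next
    case (Suc n)
    show ?case
    proof (cases "k = Suc n")
      case True thus ?thesis by simp
    next
      case False
      hence "k \<le> n" using Suc(2) by simp
      moreover have "i \<noteq> jj n" using Suc(3) \<open>k \<le> n\<close> by auto
      ultimately show ?thesis using Suc by (simp add: ZS ej_def)
    qed
  qed
  have Zfirst: "Z m (jj m) = 0" for m
    using Zunch[of 0 m "jj m"] jjinj by (simp add: Z0)
  define z where "z i = (if i \<in> range jj then Z (Suc (inv jj i)) i else 0)" for i
  have zjj: "z (jj m) = Z (Suc m) (jj m)" for m using injjj by (simp add: z_def)
  have zP: "z \<in> P"
    unfolding prod_carrier_def z_def using ZP by (auto simp: prod_carrier_def S0)
  have zU: "z \<in> Uset S J0"
    unfolding Uset_def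
  proof (intro CollectI conjI ballI zP)
    fix i assume i: "i \<in> J0"
    show "z i = 0"
    proof (cases "i \<in> range jj")
      case True
      then obtain m where m: "i = jj m" by blast
      have "m < N" using NJ[of m] i m by (metis not_le)
      hence "bsel m (Z m) = 0" by (simp add: bsel_def)
      thus ?thesis using m zjj Zfirst by (simp add: ZS ej_0)
    next
      case False thus ?thesis by (simp add: z_def)
    qed
  qed
  have phz: "ph n z = ph n (Z (Suc n))" for n
  proof -
    let ?d = "z - Z (Suc n)"
    have dU: "?d \<in> Uset S (sJ (ph n))"
      unfolding Uset_def
    proof (intro CollectI conjI ballI)
      show "?d \<in> P" by (rule Pdiff[OF zP ZP])
      fix i assume i: "i \<in> sJ (ph n)"
      show "?d i = 0"
      proof (cases "i \<in> range jj")
        case True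
        then obtain m where m: "i = jj m" by blast
        show ?thesis
        proof (cases "m \<le> n")
          case True
          have "Z (Suc n) (jj m) = Z (Suc m) (jj m)"
            using True jjinj by (intro Zunch) auto
          thus ?thesis using m zjj by simp
        next
          case False
          have "i \<in> Ks m" using sJK[of n m] False i by auto
          thus ?thesis using finK[of m] m by simp
        qed
      next
        case False
        hence "Z (Suc n) i = Z 0 i" by (intro Zunch) auto
        thus ?thesis using False by (simp add: z_def Z0)
      qed
    qed
    have "ph n z = ph n (Z (Suc n) + ?d)" by simp
    also have "\<dots> = ph n (Z (Suc n)) * ph n ?d"
      by (rule ch_mult[OF phC ZP Pdiff[OF zP ZP]])
    also have "ph n ?d = 1" using sJ[OF phM[of n]] dU by blast
    finally show ?thesis by simp
  qed
  have far: "cmod (ph n z - 1) \<ge> 1/2" if "n \<ge> N" for n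
    using bsel[OF ZP[of n], of n] that by (simp add: phz ZS)
  define V0 where "V0 = {\<psi> :: ('i \<Rightarrow> 'a) \<Rightarrow> complex. cmod (\<psi> z - 1) < 1/2}"
  have "open V0" unfolding V0_def
    by (rule open_Collect_less) (intro continuous_intros continuous_on_product_coordinates)+
  moreover have "\<phi> z = 1" using J0(2) zU by blast
  hence "\<phi> \<in> V0" by (simp add: V0_def)
  ultimately have "\<exists>n\<ge>N. ph n \<in> V0" using clu by blast
  then obtain n where "n \<ge> N" "cmod (ph n z - 1) < 1/2" by (auto simp: V0_def)
  thus False using far by fastforce
qed




lemma main:
  assumes gb: "\<And>i. g_barrelled (S i) (c i)"
  shows "g_barrelled P C"
  unfolding g_barrelled_def
proof (intro allI impI)
  fix M :: "(('i \<Rightarrow> 'a) \<Rightarrow> complex) set"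
  assume MM: "M \<subseteq> characters P C \<and> compact M"
  hence Mc: "M \<subseteq> characters P C" and Mk: "compact M" by auto
  obtain J where J: "finite J" "\<forall>\<phi>\<in>M. \<forall>x\<in>Uset S J. \<phi> x = 1" using unif[OF Mk Mc] by blast
  show "equicontinuous C M"
    unfolding equicontinuous_def
  proof (intro allI impI)
    fix F assume CF: "C F 0"
    have evP: "eventually (\<lambda>g. g \<in> P) F" and cj: "\<And>j. c j (filtermap (\<lambda>g. g j) F) 0"
      using CF unfolding prod_conv_def by auto
    have tj: "((\<lambda>(\<phi>, x). \<phi> (ej j (x j))) \<longlongrightarrow> 1) (principal M \<times>\<^sub>F F)" for j
    proof -
      define Mj where "Mj = (\<lambda>\<phi>. \<lambda>a. \<phi> (ej j a)) ` M"
      define Fj where "Fj = filtermap (\<lambda>g. g j) F"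
      have "Mj \<subseteq> characters (S j) (c j)" unfolding Mj_def using Mc chj_char by blast
      moreover have "compact Mj" unfolding Mj_def
      proof (rule compact_continuous_image[OF _ Mk])
        have "continuous_on UNIV (\<lambda>\<phi> :: ('i \<Rightarrow> 'a) \<Rightarrow> complex. \<lambda>a. \<phi> (ej j a))"
          by (intro continuous_on_coordinatewise_then_product continuous_on_product_coordinates)
        thus "continuous_on M (\<lambda>\<phi> :: ('i \<Rightarrow> 'a) \<Rightarrow> complex. \<lambda>a. \<phi> (ej j a))"
          by (rule continuous_on_subset) simp
      qed
      ultimately have "equicontinuous (c j) Mj" using gb[of j] by (simp add: g_barrelled_def)
      hence lim1: "filterlim (\<lambda>(\<psi>, a). \<psi> a) (nhds 1) (principal Mj \<times>\<^sub>F Fj)"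
        using cj[of j] by (simp add: equicontinuous_def Fj_def)
      have lim2: "filterlim (\<lambda>(\<phi>, x). ((\<lambda>a. \<phi> (ej j a)), x j)) (principal Mj \<times>\<^sub>F Fj) (principal M \<times>\<^sub>F F)"
        unfolding filterlim_def le_filter_def eventually_filtermap
      proof (intro allI impI)
        fix Q assume "eventually Q (principal Mj \<times>\<^sub>F Fj)"
        then obtain Pf Pg where PQ: "eventually Pf (principal Mj)" "eventually Pg Fj"
          "\<forall>x y. Pf x \<longrightarrow> Pg y \<longrightarrow> Q (x, y)" unfolding eventually_prod_filter by blast
        have "\<forall>\<phi>\<in>M. Pf (\<lambda>a. \<phi> (ej j a))" using PQ(1) by (simp add: eventually_principal Mj_def)
        moreover have "eventually (\<lambda>x. Pg (x j)) F" using PQ(2) by (simp add: Fj_def eventually_filtermap)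
        ultimately show "eventually (\<lambda>p. Q (case p of (\<phi>, x) \<Rightarrow> ((\<lambda>a. \<phi> (ej j a)), x j))) (principal M \<times>\<^sub>F F)"
          unfolding eventually_prod_filter using PQ(3)
          by (intro exI[of _ "\<lambda>\<phi>. \<phi> \<in> M"] exI[of _ "\<lambda>x. Pg (x j)"]) (auto simp: eventually_principal)
      qed
      have "filterlim (\<lambda>p. (\<lambda>(\<psi>, a). \<psi> a) ((\<lambda>(\<phi>, x). ((\<lambda>a. \<phi> (ej j a)), x j)) p)) (nhds 1) (principal M \<times>\<^sub>F F)"
        by (rule filterlim_compose[OF lim1 lim2])
      thus ?thesis by (simp add: case_prod_beta')
    qed
    have "((\<lambda>p. \<Prod>j\<in>J. (\<lambda>(\<phi>, x). \<phi> (ej j (x j))) p) \<longlongrightarrow> (\<Prod>j\<in>J. 1)) (principal M \<times>\<^sub>F F)"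
      by (rule tendsto_prod) (rule tj)
    hence lim: "((\<lambda>p. \<Prod>j\<in>J. (\<lambda>(\<phi>, x). \<phi> (ej j (x j))) p) \<longlongrightarrow> 1) (principal M \<times>\<^sub>F F)" by simp
    have ev: "eventually (\<lambda>p. (\<Prod>j\<in>J. (\<lambda>(\<phi>, x). \<phi> (ej j (x j))) p) = (\<lambda>(\<phi>, x). \<phi> x) p) (principal M \<times>\<^sub>F F)"
      unfolding eventually_prod_filter
    proof (intro exI[of _ "\<lambda>\<phi>. \<phi> \<in> M"] exI[of _ "\<lambda>x. x \<in> P"] conjI allI impI)
      show "eventually (\<lambda>\<phi>. \<phi> \<in> M) (principal M)" by (simp add: eventually_principal)
      show "eventually (\<lambda>x. x \<in> P) F" by (rule evP)
      fix \<phi> x assume "\<phi> \<in> M" "x \<in> P"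
      thus "(\<Prod>j\<in>J. (\<lambda>(\<phi>, x). \<phi> (ej j (x j))) (\<phi>, x)) = (\<lambda>(\<phi>, x). \<phi> x) (\<phi>, x)"
        using factor[of \<phi> J x] J Mc by auto
    qed
    show "filterlim (\<lambda>(\<phi>, x). \<phi> x) (nhds 1) (principal M \<times>\<^sub>F F)"
      using tendsto_cong[OF ev] lim by simp
  qed
qed

end

theorem proposition2p9:
  fixes S :: "'i \<Rightarrow> 'a::ab_group_add set"
    and c :: "'i \<Rightarrow> 'a filter \<Rightarrow> 'a \<Rightarrow> bool"
  assumes "\<And>i. conv_group (S i) (c i)"
    and "\<And>i. g_barrelled (S i) (c i)"
  shows "g_barrelled (prod_carrier S) (prod_conv S c)"
proof -
  interpret pc S c by unfold_locales (rule assms(1))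
  show ?thesis by (rule main[OF assms(2)])
qed

end
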